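(* Let $f\in\mathbb R[x_1,\dots,x_n]$ be a circuit polynomial $f(x)=\sum_{j=0}^r f_{\alpha(j)}x^{\alpha(j)}+f_{\alpha^\star}x^{\alpha^\star}$ satisfying condition (C3). Then $r\in\{n-1,n\}$. If $r=n$, then $f$ is gem regular (i.e. $D(f)=\emptyset$). If $r=n-1$, then $f$ is gem irregular with $D(f)=\{\alpha^\star\}$, and $\{\alpha(0),\dots,\alpha(n-1)\}=\{2k_1e_1,\dots,2k_ne_n\}$ for some $k_i\in\mathbb N$.
   Context: A circuit polynomial is $f(x)=\sum_{j=0}^r f_{\alpha(j)}x^{\alpha(j)}+f_{\alpha^\star}x^{\alpha^\star}$ (with $f_{\alpha^\star}\ne0$) such that: $r\le n$; $\alpha(j)\in 2\mathbb N_0^n$ and $f_{\alpha(j)}>0$ for all $j$; the vertex set of the Newton polytope $\mathrm{conv}(A(f))$ is exactly $\{\alpha(0),\dots,\alpha(r)\}$ and these points are affinely independent; and $\alpha^\star=\sum_{j=0}^r\lambda_j\alpha(j)$ uniquely with all $\lambda_j>0$, $\sum_j\lambda_j=1$. Here $A(f)$ is the set of exponents with nonzero coefficient. $\mathrm{New}_\infty(f)=\mathrm{conv}(A(f)\cup\{0\})$, $V_0(f)$ is its vertex set, $V(f)=V_0(f)\setminus\{0\}$, $V^c(f)=A(f)\setminus V(f)$. Condition (C3): for every $i\in\{1,\dots,n\}$, $V(f)$ contains a vector $2k_ie_i$ with $k_i\in\mathbb N$. Let $\mathcal G(f)$ be the set of nonempty faces $G$ of $\mathrm{New}_\infty(f)$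 with $0\notin G$. An exponent $\alpha\in A(f)$ is gem degenerate if $\alpha\in V^c(f)\cap G$ for some $G\in\mathcal G(f)$; $D(f)$ is the set of gem degenerate exponents; $f$ is gem regular if $D(f)=\emptyset$ and gem irregular otherwise. *)

theory Defs
  imports "HOL-Analysis.Analysis"
begin

text \<open>A real polynomial in n variables (n = CARD('n)) is represented by its
coefficient function on exponent vectors in N_0^n (finite support).
Exponents are embedded into \<real>^n by \<open>rv\<close>.\<close>

definition rv :: "nat ^ 'n \<Rightarrow> real ^ 'n" where
  "rv \<alpha> = (\<chi> i. real (\<alpha> $ i))"

definition supp_A :: "(nat ^ 'n \<Rightarrow> real) \<Rightarrow> (nat ^ 'n) set" where
  "supp_A f = {\<alpha>. f \<alpha> \<noteq> 0}"

definition vertices :: "(real ^ 'n) set \<Rightarrow> (real ^ 'n) set" where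
  "vertices P = {x. x extreme_point_of P}"

definition New_inf :: "(nat ^ 'n \<Rightarrow> real) \<Rightarrow> (real ^ 'n) set" where
  "New_inf f = convex hull (rv ` supp_A f \<union> {0})"

definition V0 :: "(nat ^ 'n \<Rightarrow> real) \<Rightarrow> (real ^ 'n) set" where
  "V0 f = vertices (New_inf f)"

definition Vf :: "(nat ^ 'n \<Rightarrow> real) \<Rightarrow> (real ^ 'n) set" where
  "Vf f = V0 f - {0}"

definition Vc :: "(nat ^ 'n \<Rightarrow> real) \<Rightarrow> (nat ^ 'n) set" where
  "Vc f = {\<alpha> \<in> supp_A f. rv \<alpha> \<notin> Vf f}"

definition GG :: "(nat ^ 'n \<Rightarrow> real) \<Rightarrow> (real ^ 'n) set set" where
  "GG f = {G. G face_of New_inf f \<and> G \<noteq> {} \<and> 0 \<notin> G}"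

definition gem_degenerate_set :: "(nat ^ 'n \<Rightarrow> real) \<Rightarrow> (nat ^ 'n) set" where
  "gem_degenerate_set f = {\<alpha> \<in> supp_A f. \<alpha> \<in> Vc f \<and> (\<exists>G\<in>GG f. rv \<alpha> \<in> G)}"

definition gem_regular :: "(nat ^ 'n \<Rightarrow> real) \<Rightarrow> bool" where
  "gem_regular f \<longleftrightarrow> gem_degenerate_set f = {}"

definition C3 :: "(nat ^ 'n \<Rightarrow> real) \<Rightarrow> bool" where
  "C3 f \<longleftrightarrow> (\<forall>i. \<exists>k::nat. k \<ge> 1 \<and> rv (axis i (2 * k)) \<in> Vf f)"

definition circuit_poly ::
  "(nat ^ 'n \<Rightarrow> real) \<Rightarrow> nat \<Rightarrow> (nat \<Rightarrow> nat ^ 'n) \<Rightarrow> nat ^ 'n \<Rightarrow> bool" where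
  "circuit_poly f r \<alpha> \<alpha>s \<longleftrightarrow>
     r \<le> CARD('n) \<and>
     inj_on \<alpha> {0..r} \<and> \<alpha>s \<notin> \<alpha> ` {0..r} \<and>
     supp_A f = \<alpha> ` {0..r} \<union> {\<alpha>s} \<and>
     (\<forall>j\<in>{0..r}. (\<forall>i. even (\<alpha> j $ i)) \<and> f (\<alpha> j) > 0) \<and>
     f \<alpha>s \<noteq> 0 \<and>
     vertices (convex hull (rv ` supp_A f)) = rv ` \<alpha> ` {0..r} \<and>
     \<not> affine_dependent (rv ` \<alpha> ` {0..r}) \<and>
     (\<exists>!lam. (\<forall>j. j \<notin> {0..r} \<longrightarrow> lam j = 0) \<and>
          (\<forall>j\<in>{0..r}. lam j > (0::real)) \<and> (\<Sum>j\<in>{0..r}. lam j) = 1 \<and>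
          rv \<alpha>s = (\<Sum>j\<in>{0..r}. lam j *\<^sub>R rv (\<alpha> j)))"

end

theory Submission imports Defs begin

lemma rv_inj: "rv a = rv b \<Longrightarrow> a = b"
  by (simp add: rv_def vec_eq_iff)

lemma rv_axis: "rv (axis i m) = axis i (real m)"
  by (simp add: rv_def axis_def vec_eq_iff)

lemma rv_0: "rv 0 = 0"
  by (simp add: rv_def vec_eq_iff)

lemma ext_sub:
  assumes "x extreme_point_of K" "x \<in> convex hull T" "convex hull T \<subseteq> K"
  shows "x \<in> T"
proof -
  have "x extreme_point_of (convex hull T)"
    using assms unfolding extreme_point_of_def by blast
  then show ?thesis by (rule extreme_point_of_convex_hull)
qed


theorem mainTheorem5:
  fixes f :: "nat ^ 'n \<Rightarrow> real" and r :: nat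
    and \<alpha> :: "nat \<Rightarrow> nat ^ 'n" and \<alpha>s :: "nat ^ 'n"
  assumes "circuit_poly f r \<alpha> \<alpha>s" and "C3 f"
  shows "r \<in> {CARD('n) - 1, CARD('n)}
    \<and> (r = CARD('n) \<longrightarrow> gem_regular f)
    \<and> (r = CARD('n) - 1 \<longrightarrow>
         \<not> gem_regular f \<and> gem_degenerate_set f = {\<alpha>s} \<and>
         (\<exists>k :: 'n \<Rightarrow> nat. (\<forall>i. k i \<ge> 1) \<and>
            \<alpha> ` {0..r} = range (\<lambda>i. axis i (2 * k i))))"
proof -
  note cp = assms(1)[unfolded circuit_poly_def]
  have rle: "r \<le> CARD('n)" and inj\<alpha>: "inj_on \<alpha> {0..r}" and sn: "\<alpha>s \<notin> \<alpha> ` {0..r}"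
    and supp: "supp_A f = \<alpha> ` {0..r} \<union> {\<alpha>s}"
    and indep: "\<not> affine_dependent (rv ` \<alpha> ` {0..r})"
    using cp by auto
  obtain lam where lam0: "\<forall>j\<in>{0..r}. lam j > (0::real)" and lam1: "(\<Sum>j\<in>{0..r}. lam j) = 1"
    and lamrep: "rv \<alpha>s = (\<Sum>j\<in>{0..r}. lam j *\<^sub>R rv (\<alpha> j))"
    using cp by auto
  define A where "A = rv ` \<alpha> ` {0..r}"
  define N where "N = New_inf f"
  have Ndef: "N = convex hull (A \<union> {rv \<alpha>s} \<union> {0})"
    unfolding N_def New_inf_def A_def supp by (simp add: image_Un)
  have finA: "finite A" unfolding A_def by simp
  have rsA: "rv \<alpha>s \<notin> A" unfolding A_def using sn rv_inj by blast
  have rshull: "rv \<alpha>s \<in> convex hull A"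
    unfolding lamrep A_def
    by (rule convex_sum) (use lam0 lam1 in \<open>auto intro: hull_inc less_imp_le\<close>)
  have AN: "convex hull A \<subseteq> N" unfolding Ndef by (rule hull_mono) auto
  have rs_not_ext: "\<not> rv \<alpha>s extreme_point_of N"
    using ext_sub[OF _ rshull AN] rsA by blast
  have ext_N: "x \<in> A \<union> {rv \<alpha>s} \<union> {0}" if "x extreme_point_of N" for x
    using that unfolding Ndef by (rule extreme_point_of_convex_hull)
  have compN: "compact N" and convN: "convex N"
    unfolding Ndef using finA by (auto intro!: finite_imp_compact_convex_hull)
  have VfE: "x \<in> Vf f \<longleftrightarrow> x extreme_point_of N \<and> x \<noteq> 0" for x
    unfolding Vf_def V0_def vertices_def N_def by auto
  obtain k where k: "\<And>i. k i \<ge> 1 \<and> rv (axis i (2 * k i)) \<in> Vf f"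
    using assms(2) unfolding C3_def by metis
  have axA: "\<exists>j\<in>{0..r}. \<alpha> j = axis i (2 * k i)" for i
  proof -
    have "rv (axis i (2 * k i)) extreme_point_of N" "rv (axis i (2 * k i)) \<noteq> 0"
      using k[of i] VfE by auto
    moreover have "rv (axis i (2 * k i)) \<in> A \<union> {rv \<alpha>s} \<union> {0}" using calculation(1) by (rule ext_N)
    ultimately have "rv (axis i (2 * k i)) \<in> A" using rs_not_ext by auto
    then show ?thesis unfolding A_def using rv_inj by force
  qed
  define g where "g i = (SOME j. j \<in> {0..r} \<and> \<alpha> j = axis i (2 * k i))" for i
  have g: "g i \<in> {0..r} \<and> \<alpha> (g i) = axis i (2 * k i)" for i
    unfolding g_def using someI_ex[OF axA[of i, unfolded Bex_def]] by blast
  have ginj: "inj g"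
  proof (rule injI)
    fix i i' assume "g i = g i'"
    then have "axis i (2 * k i) = axis i' (2 * k i')" using g by metis
    then show "i = i'" using k[of i] by (auto simp: axis_eq_axis)
  qed
  have gsub: "range g \<subseteq> {0..r}" using g by auto
  have cardle: "CARD('n) \<le> r + 1"
    using card_inj_on_le[OF ginj[unfolded inj_on_def, folded inj_on_def] gsub] by simp
  have part1: "r \<in> {CARD('n) - 1, CARD('n)}" using cardle rle by auto
  have Dsub: "gem_degenerate_set f \<subseteq> {\<alpha>s}"
  proof
    fix \<beta> assume b: "\<beta> \<in> gem_degenerate_set f"
    show "\<beta> \<in> {\<alpha>s}"
    proof (rule ccontr)
      assume "\<beta> \<notin> {\<alpha>s}"
      then obtain j where j: "j \<in> {0..r}" "\<beta> = \<alpha> j"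
        using b supp unfolding gem_degenerate_set_def by auto
      have nV: "rv \<beta> \<notin> Vf f" using b unfolding gem_degenerate_set_def Vc_def by auto
      obtain G where G: "G face_of N" "0 \<notin> G" "rv \<beta> \<in> G"
        using b unfolding gem_degenerate_set_def GG_def N_def by auto
      have "compact G" "convex G" using G(1) compN convN face_of_imp_compact face_of_imp_convex by auto
      then have Geq: "G = convex hull {x. x extreme_point_of G}" by (rule Krein_Milman_Minkowski)
      have "{x. x extreme_point_of G} \<subseteq> A - {rv \<beta>}"
      proof
        fix x assume "x \<in> {x. x extreme_point_of G}"
        then have x: "x extreme_point_of N" "x \<in> G" using extreme_point_of_face[OF G(1)] by auto
        then have "x \<noteq> 0" using G(2) by auto
        moreover have "x \<noteq> rv \<alpha>s" using x rs_not_ext by auto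
        moreover have "x \<noteq> rv \<beta>" using x nV VfE \<open>x \<noteq> 0\<close> by auto
        ultimately show "x \<in> A - {rv \<beta>}" using ext_N[OF x(1)] by auto
      qed
      then have "rv \<beta> \<in> convex hull (A - {rv \<beta>})" using G(3) Geq hull_mono by blast
      then have "rv \<beta> \<in> affine hull (A - {rv \<beta>})" using convex_hull_subset_affine_hull by blast
      moreover have "rv \<beta> \<in> A" unfolding A_def using j by auto
      ultimately show False using indep unfolding A_def affine_dependent_def by blast
    qed
  qed
  have Vc_rs: "\<alpha>s \<in> Vc f" using rs_not_ext VfE supp unfolding Vc_def by auto
  have part2: "gem_regular f" if rn: "r = CARD('n)"
  proof -
    have "\<alpha>s \<notin> gem_degenerate_set f"
    proof
      assume "\<alpha>s \<in> gem_degenerate_set f"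
      then obtain G where G: "G face_of N" "0 \<notin> G" "rv \<alpha>s \<in> G"
        unfolding gem_degenerate_set_def GG_def N_def by auto
      have inj2: "inj_on (rv \<circ> \<alpha>) {0..r}" using inj\<alpha> rv_inj by (auto simp: inj_on_def)
      have Aimg: "A = (rv \<circ> \<alpha>) ` {0..r}" unfolding A_def by auto
      have cardA: "card A = r + 1" unfolding Aimg using card_image[OF inj2] by simp
      define u where "u x = lam (inv_into {0..r} (rv \<circ> \<alpha>) x)" for x
      have uj: "u ((rv \<circ> \<alpha>) j) = lam j" if "j \<in> {0..r}" for j
        unfolding u_def using inv_into_f_f[OF inj2 that] by simp
      have lamlt: "lam j < 1" if j: "j \<in> {0..r}" for j
      proof -
        define j' where "j' = (if j = 0 then 1 else 0::nat)"
        have r1: "r \<ge> 1" using rn by simp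
        have j': "j' \<in> {0..r}" "j' \<noteq> j" using r1 by (auto simp: j'_def)
        have "lam j + lam j' = (\<Sum>x\<in>{j,j'}. lam x)" using j' by simp
        also have "\<dots> \<le> (\<Sum>x\<in>{0..r}. lam x)"
          by (rule sum_mono2) (use j j' lam0 in \<open>auto intro: less_imp_le\<close>)
        finally show ?thesis using lam1 lam0 j' by fastforce
      qed
      have "rv \<alpha>s \<in> interior (convex hull A)"
      proof -
        have "(\<forall>x\<in>A. 0 < u x \<and> u x < 1) \<and> sum u A = 1 \<and> (\<Sum>x\<in>A. u x *\<^sub>R x) = rv \<alpha>s"
        proof (intro conjI)
          show "\<forall>x\<in>A. 0 < u x \<and> u x < 1" unfolding Aimg using uj lam0 lamlt by auto
          show "sum u A = 1" unfolding Aimg sum.reindex[OF inj2] using uj lam1 by simp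
          show "(\<Sum>x\<in>A. u x *\<^sub>R x) = rv \<alpha>s" unfolding Aimg sum.reindex[OF inj2] lamrep
            using uj by simp
        qed
        moreover have "\<not> card A \<le> DIM(real^'n)" using cardA rn by simp
        ultimately show ?thesis
          unfolding interior_convex_hull_explicit[OF indep[folded A_def]] by auto
      qed
      then have "rv \<alpha>s \<in> rel_interior N"
        using interior_mono[OF AN] interior_subset_rel_interior by blast
      moreover have "G \<noteq> N" using G(2) unfolding Ndef by (auto intro: hull_inc)
      ultimately show False using face_of_subset_rel_frontier[OF G(1)] G(3)
        unfolding rel_frontier_def by blast
    qed
    then show ?thesis using Dsub unfolding gem_regular_def by auto
  qed
  have part3: "\<not> gem_regular f \<and> gem_degenerate_set f = {\<alpha>s} \<and>
         (\<exists>k :: 'n \<Rightarrow> nat. (\<forall>i. k i \<ge> 1) \<and>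
            \<alpha> ` {0..r} = range (\<lambda>i. axis i (2 * k i)))" if rn: "r = CARD('n) - 1"
  proof -
    have "card (range g) = card {0..r}" using card_image[OF ginj] rn by simp
    then have gr: "range g = {0..r}" using gsub by (simp add: card_subset_eq)
    have img: "\<alpha> ` {0..r} = range (\<lambda>i. axis i (2 * k i))"
      unfolding gr[symmetric] using g by (auto simp: image_iff)
    define a :: "real^'n" where "a = (\<chi> i. 1 / real (2 * k i))"
    have aax: "a \<bullet> rv (axis i (2 * k i)) = 1" for i
      unfolding rv_axis a_def inner_axis using k[of i] by simp
    have AH: "A \<subseteq> {x. a \<bullet> x = 1}" unfolding A_def img using aax by auto
    have rs1: "a \<bullet> rv \<alpha>s = 1"
      using hull_minimal[of A "{x. a \<bullet> x = 1}" convex, OF AH convex_hyperplane[of a 1]] rshull by blast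
    have le: "a \<bullet> x \<le> 1" if "x \<in> N" for x
    proof -
      have "A \<union> {rv \<alpha>s} \<union> {0} \<subseteq> {x. a \<bullet> x \<le> 1}" using AH rs1 by auto
      then show ?thesis using hull_minimal[of "A \<union> {rv \<alpha>s} \<union> {0}" "{x. a \<bullet> x \<le> 1}" convex, OF _ convex_halfspace_le[of a 1]] that unfolding Ndef by blast
    qed
    define G where "G = N \<inter> {x. a \<bullet> x = 1}"
    have "G face_of N" unfolding G_def by (rule face_of_Int_supporting_hyperplane_le[OF convN le])
    moreover have "rv \<alpha>s \<in> G" unfolding G_def using rs1 rshull AN by auto
    moreover have "0 \<notin> G" unfolding G_def by simp
    ultimately have "G \<in> GG f" "rv \<alpha>s \<in> G" unfolding GG_def N_def by auto
    then have "\<alpha>s \<in> gem_degenerate_set f" using Vc_rs supp unfolding gem_degenerate_set_def by auto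
    then have D: "gem_degenerate_set f = {\<alpha>s}" using Dsub by auto
    have "\<forall>i. k i \<ge> 1" using k by auto
    then show ?thesis using D img unfolding gem_regular_def by blast
  qed
  show ?thesis using part1 part2 part3 by blast
qed

end
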